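(* Let $L\ge 1$ be an integer, let $\sigma^2>0$, and let $\bm{a}:[-1,1]\times[-1,1]\to\mathbb{C}^L$ be a function satisfying $\|\bm{a}(\omega,\mu)\|^2=L$ for all $(\omega,\mu)$. For parameters $x>0$, $\lambda\in[0,1]$, $(\omega,\mu)\in[-1,1]^2$ and $\psi\in[0,2\pi)$, consider the complex Gaussian density on $\mathbb{C}^L$ $$f(\bm{y}\mid x,\lambda,\omega,\mu,\psi)=\frac{1}{(\pi\epsilon^2)^L}\exp\!\Big(-\frac{\|\bm{y}-x\lambda\,\bm{a}(\omega,\mu)e^{\mathrm{j}\psi}\|^2}{\epsilon^2}\Big),\qquad \epsilon^2=x^2(1-\lambda^2)+\sigma^2,$$ i.e. the density of $\mathcal{CN}\big(x\lambda\bm{a}(\omega,\mu)e^{\mathrm{j}\psi},\,\epsilon^2\bm{I}_L\big)$. Fix an observation $\bm{y}\in\mathbb{C}^L$ and write $\bar{\bm{y}}=\bm{y}/\sqrt{L}$ and $\bar{\bm{a}}(\omega,\mu)=\bm{a}(\omega,\mu)/\sqrt{L}$. Let $(\omega_1^*,\mu_1^* )$ be a maximizer of $(\omega,\mu)\mapsto|\bar{\bm{y}}^H\bar{\bm{a}}(\omega,\mu)|^2$ over $[-1,1]^2$, assume $\bar{\bm{y}}^H\bar{\bm{a}}(\omega_1^*,\mu_1^* )\neq 0$, and set $\Xi^*=\|\bar{\bm{y}}\|^2-|\bar{\bm{y}}^H\bar{\bm{a}}(\omega_1^*,\mu_1^* )|^2-\sigma^2$. Define $x_1^*>0$, $\lambda_1^*\in[0,1]$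 and $\psi^*$ by $$(x_1^* )^2=\begin{cases}\|\bar{\bm{y}}\|^2-\sigma^2,&\Xi^*\ge 0,\\ |\bar{\bm{y}}^H\bar{\bm{a}}(\omega_1^*,\mu_1^* )|^2,&\Xi^*<0,\end{cases}\qquad (\lambda_1^* )^2=\begin{cases}\dfrac{|\bar{\bm{y}}^H\bar{\bm{a}}(\omega_1^*,\mu_1^* )|^2}{\|\bar{\bm{y}}\|^2-\sigma^2},&\Xi^*\ge 0,\\ 1,&\Xi^*<0,\end{cases}$$ $$e^{-\mathrm{j}\psi^*}=\frac{\bar{\bm{y}}^H\bar{\bm{a}}(\omega_1^*,\mu_1^* )}{|\bar{\bm{y}}^H\bar{\bm{a}}(\omega_1^*,\mu_1^* )|}.$$ Then $(x_1^*,\lambda_1^*,\omega_1^*,\mu_1^*,\psi^* )$ maximizes $\ln f(\bm{y}\mid x,\lambda,\omega,\mu,\psi)$ over all $x>0$, $\lambda\in[0,1]$, $(\omega,\mu)\in[-1,1]^2$, $\psi\in[0,2\pi)$.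
   Context: This is the maximum-likelihood estimation of the unknown parameters of a ground-to-air Rician channel under the hypothesis that the received (matched-filtered) training signal comes from an unknown attacker: $\bm{y}=x\,(\lambda\bm{a}(\omega,\mu)+\sqrt{1-\lambda^2}\,\bm{h})e^{\mathrm{j}\psi}+\bm{n}$ with $\bm{h}\sim\mathcal{CN}(\bm{0},\bm{I}_L)$ and $\bm{n}\sim\mathcal{CN}(\bm{0},\sigma^2\bm{I}_L)$ independent, which gives the density above. Here $\bm{a}(\omega,\mu)$ is the array steering vector, $\lambda=\sqrt{1/(1+\kappa)}$ with $\kappa$ the Rician factor, $x$ is the received amplitude, $\psi$ a phase rotation, and $(\cdot)^H$ denotes conjugate transpose. *)

theory Defs
  imports "HOL-Analysis.Analysis"
begin

text \<open>Vectors in C^L are modelled as complex^'n with L = CARD('n).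
  Hermitian inner product u^H v.\<close>
definition hprod :: "complex^'n \<Rightarrow> complex^'n \<Rightarrow> complex" where
  "hprod u v = (\<Sum>i\<in>UNIV. cnj (u $ i) * v $ i)"

definition rician_pdf ::
  "real \<Rightarrow> (real \<Rightarrow> real \<Rightarrow> complex^'n) \<Rightarrow> complex^'n \<Rightarrow> real \<Rightarrow> real \<Rightarrow> real \<Rightarrow> real \<Rightarrow> real \<Rightarrow> real" where
  "rician_pdf sigma2 a y x lam om mu psi =
     (let eps2 = x\<^sup>2 * (1 - lam\<^sup>2) + sigma2 in
      1 / (pi * eps2) ^ CARD('n) *
      exp (- (norm (y - (complex_of_real (x * lam) * exp (\<i> * complex_of_real psi)) *s a om mu))\<^sup>2 / eps2))"

end

theory Submission imports Defs begin
lemma comp: "(cmod (u - s * v))^2 = (cmod u)^2 - 2 * Re (s * (cnj u * v)) + (cmod s)^2 * (cmod v)^2" for u s v :: complex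
  unfolding cmod_power2 by (simp add: power2_eq_square algebra_simps)
lemma norm_sq_vec: "(norm (x::complex^'n))^2 = (\<Sum>i\<in>UNIV. (cmod (x$i))^2)"
  unfolding norm_vec_def L2_set_def by (simp add: sum_nonneg)
lemma norm_sub_scale: "(norm (y - s *s a))^2 = (norm y)^2 - 2 * Re (s * hprod y a) + (cmod s)^2 * (norm (a::complex^'n))^2"
  unfolding norm_sq_vec hprod_def
  by (simp add: comp sum_subtractf sum_distrib_left Re_sum sum.distrib)
lemma hprod_scale: "hprod (r *\<^sub>R u) (r *\<^sub>R v) = complex_of_real (r^2) * hprod u v"
  unfolding hprod_def sum_distrib_left by (rule sum.cong) (simp_all only: vector_scaleR_component, simp add: scaleR_conv_of_real power2_eq_square)
lemma ln_pdf: "e > 0 \<Longrightarrow> ln (1 / (pi * e) ^ L * exp z) = - real L * ln (pi * e) + z"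
  by (simp add: ln_mult ln_div ln_realpow)
lemma key:
  fixes L e s N D e0 N0 :: real
  assumes "L > 0" "s > 0" "e \<ge> s" "N \<ge> L * D" "N0 = L * D" "e0 = (if D \<ge> s then D else s)"
  shows "- L * ln (pi * e) - N / e \<le> - L * ln (pi * e0) - N0 / e0"
proof -
  have e: "e > 0" using assms by linarith
  have e0: "e0 > 0" using assms by auto
  have "N / e \<ge> L * D / e" using assms e by (simp add: divide_right_mono)
  have main: "ln e0 + D / e0 \<le> ln e + D / e"
  proof (cases "D \<ge> s")
    case True
    then have "e0 = D" using assms by simp
    have "ln (D / e) \<le> D / e - 1" using True assms e by (intro ln_le_minus_one) auto
    then show ?thesis using \<open>e0 = D\<close> True assms e by (simp add: ln_div)
  next
    case False
    then have "e0 = s" using assms by simp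
    have l: "ln (s / e) \<le> s / e - 1" using assms e by (intro ln_le_minus_one) auto
    have "s / e - 1 + D / s - D / e \<le> 0"
    proof -
      have "s / e - 1 + D / s - D / e = (s - e) * (s - D) / (e * s)"
        using e assms by (simp add: field_simps)
      also have "\<dots> \<le> 0" using False assms e
        by (intro divide_nonpos_pos mult_nonpos_nonneg) auto
      finally show ?thesis .
    qed
    then show ?thesis using l \<open>e0 = s\<close> assms e by (simp add: ln_div)
  qed
  have "L * (ln e0 + D / e0) \<le> L * (ln e + D / e)" using main assms by simp
  then show ?thesis using \<open>N / e \<ge> L * D / e\<close> assms e e0
    by (simp add: ln_mult algebra_simps)
qed
theorem theorem1:
  fixes sigma2 :: real
    and a :: "real \<Rightarrow> real \<Rightarrow> complex^'n"
    and y :: "complex^'n"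
    and om1 mu1 x1 lam1 psi1 :: real
  assumes sigma_pos: "sigma2 > 0"
    and a_norm: "\<And>om mu. om \<in> {-1..1} \<Longrightarrow> mu \<in> {-1..1} \<Longrightarrow> (norm (a om mu))\<^sup>2 = real CARD('n)"
    and om1: "om1 \<in> {-1..1}" and mu1: "mu1 \<in> {-1..1}"
    and maxim: "\<And>om mu. om \<in> {-1..1} \<Longrightarrow> mu \<in> {-1..1} \<Longrightarrow>
        (cmod (hprod ((1 / sqrt (real CARD('n))) *\<^sub>R y) ((1 / sqrt (real CARD('n))) *\<^sub>R a om mu)))\<^sup>2
        \<le> (cmod (hprod ((1 / sqrt (real CARD('n))) *\<^sub>R y) ((1 / sqrt (real CARD('n))) *\<^sub>R a om1 mu1)))\<^sup>2"
    and nonzero: "hprod ((1 / sqrt (real CARD('n))) *\<^sub>R y) ((1 / sqrt (real CARD('n))) *\<^sub>R a om1 mu1) \<noteq> 0"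
    and x1_pos: "x1 > 0"
    and lam1_range: "lam1 \<in> {0..1}"
    and x1_def: "x1\<^sup>2 = (let c = hprod ((1 / sqrt (real CARD('n))) *\<^sub>R y) ((1 / sqrt (real CARD('n))) *\<^sub>R a om1 mu1);
                     Xi = (norm ((1 / sqrt (real CARD('n))) *\<^sub>R y))\<^sup>2 - (cmod c)\<^sup>2 - sigma2
                 in if Xi \<ge> 0 then (norm ((1 / sqrt (real CARD('n))) *\<^sub>R y))\<^sup>2 - sigma2 else (cmod c)\<^sup>2)"
    and lam1_def: "lam1\<^sup>2 = (let c = hprod ((1 / sqrt (real CARD('n))) *\<^sub>R y) ((1 / sqrt (real CARD('n))) *\<^sub>R a om1 mu1);
                     Xi = (norm ((1 / sqrt (real CARD('n))) *\<^sub>R y))\<^sup>2 - (cmod c)\<^sup>2 - sigma2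
                 in if Xi \<ge> 0 then (cmod c)\<^sup>2 / ((norm ((1 / sqrt (real CARD('n))) *\<^sub>R y))\<^sup>2 - sigma2) else 1)"
    and psi1_range: "psi1 \<in> {0..<2 * pi}"
    and psi1_def: "exp (- \<i> * complex_of_real psi1) =
          hprod ((1 / sqrt (real CARD('n))) *\<^sub>R y) ((1 / sqrt (real CARD('n))) *\<^sub>R a om1 mu1)
          / complex_of_real (cmod (hprod ((1 / sqrt (real CARD('n))) *\<^sub>R y) ((1 / sqrt (real CARD('n))) *\<^sub>R a om1 mu1)))"
  shows "\<forall>x lam om mu psi. x > 0 \<longrightarrow> lam \<in> {0..1} \<longrightarrow> om \<in> {-1..1} \<longrightarrow> mu \<in> {-1..1}
            \<longrightarrow> psi \<in> {0..<2 * pi} \<longrightarrow>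
           ln (rician_pdf sigma2 a y x lam om mu psi) \<le> ln (rician_pdf sigma2 a y x1 lam1 om1 mu1 psi1)"
proof (intro allI impI)
  fix x lam om mu psi :: real
  assume x: "x > 0" and lam: "lam \<in> {0..1}" and om: "om \<in> {-1..1}" and mu: "mu \<in> {-1..1}"
    and psi: "psi \<in> {0..<2 * pi}"
  define L where "L = real CARD('n)"
  have L: "L > 0" unfolding L_def by simp
  define r where "r = 1 / sqrt L"
  have r2: "r^2 = 1 / L" unfolding r_def using L by (simp add: power_divide)
  define cf where "cf om mu = hprod (r *\<^sub>R y) (r *\<^sub>R a om mu)" for om mu
  define c0 where "c0 = cmod (cf om1 mu1)"
  define Y where "Y = (norm (r *\<^sub>R y))^2"
  define D where "D = Y - c0^2"
  have c0: "c0 > 0" using nonzero unfolding c0_def cf_def r_def L_def by simp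
  have hp: "hprod y (a om mu) = of_real L * cf om mu" for om mu
    unfolding cf_def hprod_scale r2 using L by simp
  have Yn: "(norm y)^2 = L * Y" unfolding Y_def using r2 L
    by (simp add: power_mult_distrib)
  have x1sq: "x1^2 = (if D \<ge> sigma2 then Y - sigma2 else c0^2)"
    using x1_def unfolding D_def Y_def c0_def cf_def r_def L_def Let_def by (simp add: algebra_simps)
  have lam1sq: "lam1^2 = (if D \<ge> sigma2 then c0^2 / (Y - sigma2) else 1)"
    using lam1_def unfolding D_def Y_def c0_def cf_def r_def L_def Let_def by (simp add: algebra_simps)
  have B0sq: "(x1 * lam1)^2 = c0^2"
  proof (cases "D \<ge> sigma2")
    case True
    then have "Y - sigma2 > 0" using c0 sigma_pos unfolding D_def
      by (smt (verit) zero_less_power)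
    then show ?thesis using True x1sq lam1sq by (simp add: power_mult_distrib)
  next
    case False
    then have "x1^2 = c0^2" "lam1^2 = 1" using x1sq lam1sq by auto
    then show ?thesis by (simp add: power_mult_distrib)
  qed
  have B0: "x1 * lam1 = c0"
  proof (rule power2_eq_imp_eq[OF B0sq])
    show "0 \<le> x1 * lam1" using x1_pos lam1_range by simp
    show "0 \<le> c0" using c0 by simp
  qed
  define e0 where "e0 = x1^2 * (1 - lam1^2) + sigma2"
  have e0': "e0 = (if D \<ge> sigma2 then D else sigma2)"
  proof (cases "D \<ge> sigma2")
    case True
    then have "Y - sigma2 > 0" using c0 sigma_pos unfolding D_def
      by (smt (verit) zero_less_power)
    have "x1^2 = Y - sigma2" "lam1^2 = c0^2 / (Y - sigma2)" using True x1sq lam1sq by auto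
    then have "x1^2 * lam1^2 = c0^2" using \<open>Y - sigma2 > 0\<close> by simp
    moreover have "e0 = x1^2 - x1^2 * lam1^2 + sigma2" unfolding e0_def by (simp add: algebra_simps)
    ultimately show ?thesis using True \<open>x1^2 = Y - sigma2\<close> unfolding D_def by simp
  next
    case False
    then have "x1^2 = c0^2" "lam1^2 = 1" using x1sq lam1sq by auto
    then show ?thesis using False unfolding e0_def by simp
  qed
  have e0pos: "e0 > 0" using e0' sigma_pos by auto
  define e where "e = x^2 * (1 - lam^2) + sigma2"
  have e_ge: "e \<ge> sigma2" unfolding e_def using lam
    by (simp add: power_le_one)
  have epos: "e > 0" using e_ge sigma_pos by linarith
  have an: "(norm (a om mu))^2 = L" "(norm (a om1 mu1))^2 = L"
    using a_norm om mu om1 mu1 unfolding L_def by auto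
  define s where "s = complex_of_real (x * lam) * exp (\<i> * complex_of_real psi)"
  define s1 where "s1 = complex_of_real (x1 * lam1) * exp (\<i> * complex_of_real psi1)"
  define N where "N = (norm (y - s *s a om mu))^2"
  define N0 where "N0 = (norm (y - s1 *s a om1 mu1))^2"
  have cms: "cmod s = x * lam" unfolding s_def using x lam by (simp add: norm_mult)
  have cmcf: "cmod (cf om mu) \<le> c0"
  proof -
    have "(cmod (cf om mu))^2 \<le> c0^2" using maxim[OF om mu] unfolding cf_def c0_def r_def L_def by simp
    then show ?thesis using c0 by (simp add: abs_le_square_iff)
  qed
  have "Re (s * hprod y (a om mu)) \<le> cmod (s * hprod y (a om mu))" by (rule complex_Re_le_cmod)
  also have "\<dots> = x * lam * L * cmod (cf om mu)" unfolding hp using L by (simp add: norm_mult cms)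
  also have "\<dots> \<le> x * lam * L * c0" using cmcf x lam L by (intro mult_left_mono) auto
  finally have Rle: "Re (s * hprod y (a om mu)) \<le> x * lam * L * c0" .
  have "N = L * Y - 2 * Re (s * hprod y (a om mu)) + (x * lam)^2 * L"
    unfolding N_def norm_sub_scale cms an Yn ..
  also have "\<dots> \<ge> L * D"
  proof -
    have "L * D \<le> L * (Y - 2 * (x * lam) * c0 + (x*lam)^2)"
    proof -
      have "Y - c0^2 \<le> Y - 2 * (x * lam) * c0 + (x*lam)^2"
        using zero_le_power2[of "x * lam - c0"] by (simp add: power2_diff)
      then show ?thesis unfolding D_def using L by (intro mult_left_mono) auto
    qed
    then show ?thesis using Rle by (simp add: algebra_simps)
  qed
  finally have NLD: "N \<ge> L * D" .
  have ex: "exp (\<i> * complex_of_real psi1) * cf om1 mu1 = complex_of_real c0"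
  proof -
    have "exp (\<i> * complex_of_real psi1) * exp (- \<i> * complex_of_real psi1) = 1"
      by (simp add: exp_minus)
    then have "exp (\<i> * complex_of_real psi1) * (cf om1 mu1 / complex_of_real c0) = 1"
      using psi1_def unfolding cf_def c0_def r_def L_def by simp
    then show ?thesis using c0 by (simp add: field_simps)
  qed
  have cms1: "cmod s1 = c0" unfolding s1_def using B0 c0 by (simp add: norm_mult)
  have "s1 * hprod y (a om1 mu1) = complex_of_real (c0 * c0 * L)"
    unfolding hp s1_def B0 using ex by (simp add: algebra_simps)
  then have "N0 = L * D"
    unfolding N0_def norm_sub_scale cms1 an Yn D_def by (simp add: algebra_simps power2_eq_square)
  have lnN: "ln (rician_pdf sigma2 a y x lam om mu psi) = - L * ln (pi * e) - N / e"
    unfolding rician_pdf_def Let_def e_def[symmetric]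
    by (subst ln_pdf[OF epos]) (simp add: N_def s_def L_def)
  have lnN0: "ln (rician_pdf sigma2 a y x1 lam1 om1 mu1 psi1) = - L * ln (pi * e0) - N0 / e0"
    unfolding rician_pdf_def Let_def e0_def[symmetric]
    by (subst ln_pdf[OF e0pos]) (simp add: N0_def s1_def L_def)
  show "ln (rician_pdf sigma2 a y x lam om mu psi) \<le> ln (rician_pdf sigma2 a y x1 lam1 om1 mu1 psi1)"
    unfolding lnN lnN0 by (rule key[OF L sigma_pos e_ge NLD \<open>N0 = L * D\<close> e0'])
qed

end
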